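(* Let $q=p^n$ with $p>2$ prime, $g\ge2$ with $\gcd(g,p)=1$, and $a,\alpha\in\mathbb{F}_q$, $\alpha\neq0$, such that $X: y^2=x^{2g+1}+a x^{g+1}+\alpha^g x$ is a (nonsingular) hyperelliptic curve of genus $g$. Let $\omega:(x,y)\mapsto(x,-y)$ be the hyperelliptic involution. Fix $\beta\in\overline{\mathbb{F}}_q$ with $\beta^2=\alpha$ (for odd $g$ we take $\beta^{g+1}=\alpha^{(g+1)/2}$). Then $\sigma:(x,y)\mapsto\left(\frac{\alpha}{x},\, y\frac{\beta^{g+1}}{x^{g+1}}\right)$ is a non-hyperelliptic involution of $X$, and: 1. If $g$ is odd, $X/\langle\sigma\rangle$ is given by $y^2=D_g(x,\alpha)+a$ and $X/\langle\omega\sigma\rangle$ is given by $y^2=(x^2-4\alpha)(D_g(x,\alpha)+a)$ (over $\mathbb{F}_q$). 2. If $g$ is even, $X/\langle\sigma\rangle$ is given by $y^2=(x+2\beta)(D_g(x,\alpha)+a)$ and $X/\langle\omega\sigma\rangle$ is given by $y^2=(x-2\beta)(D_g(x,\alpha)+a)$ (over $\mathbb{F}_q(\beta)$).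
   Context: For $m\ge1$ and $\alpha$ in a field, the Dickson polynomial $D_m(x,\alpha)=\sum_{i=0}^{\lfloor m/2\rfloor}\frac{m}{m-i}\binom{m-i}{i}(-\alpha)^i x^{m-2i}$ is the unique polynomial satisfying $D_m\!\left(u+\frac{\alpha}{u},\alpha\right)=u^m+\left(\frac{\alpha}{u}\right)^m$. "Is given by" means birationally equivalent to the stated curve. *)

theory Defs
  imports "HOL-Computational_Algebra.Polynomial" "HOL-Computational_Algebra.Primes"
    "HOL-Computational_Algebra.Squarefree"
begin

text \<open>Dickson polynomial D_m(x,alpha) = sum_{i=0}^{m div 2} m/(m-i) * binom(m-i,i) * (-alpha)^i * x^(m-2i).
  The coefficient m/(m-i)*binom(m-i,i) is a natural number, computed exactly in nat.\<close>
definition dickson :: "nat \<Rightarrow> 'k::field \<Rightarrow> 'k poly" where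
  "dickson m \<alpha> = (\<Sum>i\<le>m div 2.
      monom (of_nat ((m * ((m - i) choose i)) div (m - i)) * (- \<alpha>) ^ i) (m - 2 * i))"

definition hyp_poly :: "nat \<Rightarrow> 'k::field \<Rightarrow> 'k \<Rightarrow> 'k poly" where
  "hyp_poly g a \<alpha> = monom 1 (2 * g + 1) + monom a (g + 1) + monom (\<alpha> ^ g) 1"

definition field_emb :: "('k::field \<Rightarrow> 'L::field) \<Rightarrow> bool" where
  "field_emb \<iota> \<longleftrightarrow> (\<forall>a b. \<iota> (a + b) = \<iota> a + \<iota> b) \<and> (\<forall>a b. \<iota> (a * b) = \<iota> a * \<iota> b) \<and> \<iota> 1 = 1"

definition evalp :: "('k::field \<Rightarrow> 'L::field) \<Rightarrow> 'k poly \<Rightarrow> 'L \<Rightarrow> 'L" where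
  "evalp \<iota> P z = (\<Sum>i\<le>degree P. \<iota> (coeff P i) * z ^ i)"

definition transcendental_over :: "('k::field \<Rightarrow> 'L::field) \<Rightarrow> 'L \<Rightarrow> bool" where
  "transcendental_over \<iota> z \<longleftrightarrow> (\<forall>P. P \<noteq> 0 \<longrightarrow> evalp \<iota> P z \<noteq> 0)"

inductive_set gen_subfield :: "('k::field \<Rightarrow> 'L::field) \<Rightarrow> 'L set \<Rightarrow> 'L set"
  for \<iota> S where
  const: "\<iota> c \<in> gen_subfield \<iota> S"
| gen: "z \<in> S \<Longrightarrow> z \<in> gen_subfield \<iota> S"
| add: "z \<in> gen_subfield \<iota> S \<Longrightarrow> w \<in> gen_subfield \<iota> S \<Longrightarrow> z + w \<in> gen_subfield \<iota> S"
| mult: "z \<in> gen_subfield \<iota> S \<Longrightarrow> w \<in> gen_subfield \<iota> S \<Longrightarrow> z * w \<in> gen_subfield \<iota> S"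
| neg: "z \<in> gen_subfield \<iota> S \<Longrightarrow> - z \<in> gen_subfield \<iota> S"
| inv: "z \<in> gen_subfield \<iota> S \<Longrightarrow> inverse z \<in> gen_subfield \<iota> S"

text \<open>L, with elements x y, is the function field K(X) of the curve X: y^2 = f(x).\<close>
definition is_hyperell_ff :: "('k::field \<Rightarrow> 'L::field) \<Rightarrow> 'k poly \<Rightarrow> 'L \<Rightarrow> 'L \<Rightarrow> bool" where
  "is_hyperell_ff \<iota> f x y \<longleftrightarrow> field_emb \<iota> \<and> transcendental_over \<iota> x \<and> y ^ 2 = evalp \<iota> f x
     \<and> gen_subfield \<iota> {x, y} = UNIV"

text \<open>K-automorphism of L (= automorphism of the curve, birationally).\<close>
definition K_aut :: "('k::field \<Rightarrow> 'L::field) \<Rightarrow> ('L \<Rightarrow> 'L) \<Rightarrow> bool" where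
  "K_aut \<iota> s \<longleftrightarrow> bij s \<and> (\<forall>z w. s (z + w) = s z + s w) \<and> (\<forall>z w. s (z * w) = s z * s w)
     \<and> (\<forall>c. s (\<iota> c) = \<iota> c)"

text \<open>The quotient curve by the automorphism t is (birationally) given by v^2 = h(u):
  the fixed field of t is K(u,v) with u transcendental, [K(u,v):K(u)] = 2 and v^2 = h(u).\<close>
definition quotient_given_by :: "('k::field \<Rightarrow> 'L::field) \<Rightarrow> ('L \<Rightarrow> 'L) \<Rightarrow> 'k poly \<Rightarrow> bool" where
  "quotient_given_by \<iota> t h \<longleftrightarrow> (\<exists>u v. t u = u \<and> t v = v \<and>
      {z. t z = z} = gen_subfield \<iota> {u, v} \<and> transcendental_over \<iota> u \<and>
      v \<notin> gen_subfield \<iota> {u} \<and> v ^ 2 = evalp \<iota> h u)"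

definition involution_claim ::
  "('k::field \<Rightarrow> 'L::field) \<Rightarrow> 'L \<Rightarrow> 'L \<Rightarrow> nat \<Rightarrow> 'k \<Rightarrow> 'k \<Rightarrow> 'k poly \<Rightarrow> 'k poly \<Rightarrow> bool" where
  "involution_claim \<iota> x y g \<alpha> c h1 h2 \<longleftrightarrow>
     (\<exists>\<sigma> \<omega>. K_aut \<iota> \<sigma> \<and> \<sigma> x = \<iota> \<alpha> / x \<and> \<sigma> y = y * \<iota> c / x ^ (g + 1) \<and>
        K_aut \<iota> \<omega> \<and> \<omega> x = x \<and> \<omega> y = - y \<and>
        \<sigma> \<circ> \<sigma> = id \<and> \<sigma> \<noteq> id \<and> \<sigma> \<noteq> \<omega> \<and>
        quotient_given_by \<iota> \<sigma> h1 \<and> quotient_given_by \<iota> (\<omega> \<circ> \<sigma>) h2)"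

end

theory Submission
  imports Defs
begin


lemma frac_add: fixes a b q a' b' q' y :: "'a::field"
  assumes "q \<noteq> 0" "q' \<noteq> 0"
  shows "(a + b * y) / q + (a' + b' * y) / q' = ((a * q' + a' * q) + (b * q' + b' * q) * y) / (q * q')"
  using assms by (simp add: field_simps)
lemma frac_mult: fixes a b q a' b' q' y F :: "'a::field"
  assumes "q \<noteq> 0" "q' \<noteq> 0" "y ^ 2 = F"
  shows "(a + b * y) / q * ((a' + b' * y) / q') = ((a * a' + b * b' * F) + (a * b' + a' * b) * y) / (q * q')"
proof -
  have "(a + b * y) * (a' + b' * y) = (a * a' + b * b' * y^2) + (a * b' + a' * b) * y"
    by (simp add: algebra_simps power2_eq_square)
  then show ?thesis using assms by simp
qed
lemma frac_inv: fixes a b q y F :: "'a::field"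
  assumes "q \<noteq> 0" "y ^ 2 = F" "a + b * y \<noteq> 0" "a^2 - b^2 * F \<noteq> 0"
  shows "inverse ((a + b * y) / q) = (q * a + - (q * b) * y) / (a^2 - b^2 * F)"
proof -
  have D: "a^2 - b^2 * F = (a + b * y) * (a - b * y)"
    using assms(2) by (simp add: algebra_simps power2_eq_square)
  then have m: "a - b * y \<noteq> 0" using assms(4) by auto
  have "(q * a + - (q * b) * y) / (a^2 - b^2 * F) = (q * (a - b * y)) / ((a + b * y) * (a - b * y))"
    unfolding D by (simp add: algebra_simps)
  also have "\<dots> = q / (a + b * y)" using m by simp
  finally show ?thesis using assms by simp
qed

locale emb =
  fixes \<iota> :: "'k::field \<Rightarrow> 'L::field"
  assumes emb: "field_emb \<iota>"
begin

lemma iota_add[simp]: "\<iota> (a + b) = \<iota> a + \<iota> b" using emb by (simp add: field_emb_def)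
lemma iota_mult[simp]: "\<iota> (a * b) = \<iota> a * \<iota> b" using emb by (simp add: field_emb_def)
lemma iota_1[simp]: "\<iota> 1 = 1" using emb by (simp add: field_emb_def)
lemma iota_0[simp]: "\<iota> 0 = 0"
proof -
  have "\<iota> 0 + \<iota> 0 = \<iota> 0 + 0" using iota_add[of 0 0] by simp
  then show ?thesis by (rule add_left_imp_eq)
qed
lemma iota_neg[simp]: "\<iota> (- a) = - \<iota> a"
proof -
  have "\<iota> (a + - a) = \<iota> a + \<iota> (- a)" by (rule iota_add)
  then have "\<iota> a + \<iota> (- a) = 0" by simp
  then show ?thesis by (metis minus_unique)
qed
lemma iota_diff[simp]: "\<iota> (a - b) = \<iota> a - \<iota> b"
  using iota_add[of a "- b"] by simp
lemma iota_eq0[simp]: "\<iota> a = 0 \<longleftrightarrow> a = 0"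
proof
  assume h: "\<iota> a = 0"
  show "a = 0"
  proof (rule ccontr)
    assume "a \<noteq> 0"
    then have "\<iota> (a * inverse a) = 1" by simp
    then show False using h by simp
  qed
qed simp
lemma iota_inj: "\<iota> a = \<iota> b \<longleftrightarrow> a = b"
  using iota_eq0[of "a - b"] by simp
lemma iota_power[simp]: "\<iota> (a ^ n) = \<iota> a ^ n"
  by (induction n) simp_all
lemma iota_of_nat[simp]: "\<iota> (of_nat n) = of_nat n"
  by (induction n) simp_all
lemma iota_numeral[simp]: "\<iota> (numeral w) = numeral w"
  using iota_of_nat[of "numeral w"] by simp
lemma iota_inverse[simp]: "\<iota> (inverse a) = inverse (\<iota> a)"
proof (cases "a = 0")
  case False
  then have "\<iota> a * \<iota> (inverse a) = 1" using iota_mult[of a "inverse a"] by simp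
  then show ?thesis by (metis inverse_unique)
qed simp
lemma iota_divide[simp]: "\<iota> (a / b) = \<iota> a / \<iota> b"
  by (simp add: divide_inverse)

definition E :: "'k poly \<Rightarrow> 'L \<Rightarrow> 'L" where
  "E P z = poly (map_poly \<iota> P) z"

lemma E_pCons[simp]: "E (pCons c P) z = \<iota> c + z * E P z"
  by (simp add: E_def map_poly_pCons)
lemma E_0[simp]: "E 0 z = 0" by (simp add: E_def)
lemma E_add[simp]: "E (P + Q) z = E P z + E Q z"
proof (induction P arbitrary: Q)
  case 0 then show ?case by simp
next
  case (pCons a P)
  show ?case
  proof (cases Q)
    case (pCons b Q')
    then show ?thesis by (simp add: pCons.IH distrib_left add_ac)
  qed
qed
lemma E_smult[simp]: "E (smult c P) z = \<iota> c * E P z"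
  by (induction P) (simp_all add: algebra_simps)
lemma E_mult[simp]: "E (P * Q) z = E P z * E Q z"
  by (induction P) (simp_all add: algebra_simps)
lemma E_neg[simp]: "E (- P) z = - E P z"
  using E_add[of P "- P" z] by (metis E_0 add.right_inverse minus_unique)
lemma E_diff[simp]: "E (P - Q) z = E P z - E Q z"
  using E_add[of P "- Q" z] by simp
lemma E_1[simp]: "E 1 z = 1" by (simp add: one_pCons)
lemma E_power[simp]: "E (P ^ n) z = E P z ^ n"
  by (induction n) simp_all
lemma E_monom[simp]: "E (monom c n) z = \<iota> c * z ^ n"
  by (simp add: E_def map_poly_monom poly_monom)
lemma E_sum[simp]: "E (sum F S) z = (\<Sum>i\<in>S. E (F i) z)"
  by (induction S rule: infinite_finite_induct) simp_all

lemma E_altdef: "E P z = (\<Sum>i\<le>degree P. \<iota> (coeff P i) * z ^ i)"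
  unfolding E_def poly_altdef by (simp add: degree_map_poly coeff_map_poly)

lemma evalp_E: "evalp \<iota> P z = E P z"
  by (simp add: evalp_def E_altdef)

end
locale hyp = emb \<iota> for \<iota> :: "'k::field \<Rightarrow> 'L::field" +
  fixes f :: "'k poly" and x y :: 'L
  assumes trans: "transcendental_over \<iota> x"
    and yf: "y ^ 2 = E f x"
    and gen: "gen_subfield \<iota> {x, y} = UNIV"
    and odd_f: "odd (degree f)"
begin

lemma trans_E: "E P x = 0 \<Longrightarrow> P = 0"
  using trans by (auto simp: transcendental_over_def evalp_E)

lemma x_nz: "x \<noteq> 0"
  using trans_E[of "[:0,1:]"] by auto

lemma f_nz: "f \<noteq> 0" using odd_f by auto

lemma parity: assumes "P ^ 2 = f * R ^ 2" shows "R = 0"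
proof (rule ccontr)
  assume R: "R \<noteq> 0"
  then have "f * R ^ 2 \<noteq> 0" using f_nz by simp
  then have P: "P \<noteq> 0" using assms by auto
  have "degree (P ^ 2) = 2 * degree P" using P by (simp add: degree_power_eq)
  moreover have "degree (f * R ^ 2) = degree f + 2 * degree R"
    using R f_nz by (simp add: degree_mult_eq degree_power_eq)
  ultimately have "degree f + 2 * degree R = 2 * degree P" using assms by simp
  then show False using odd_f by presburger
qed

lemma indep: assumes "E P x + E R x * y = 0" shows "P = 0 \<and> R = 0"
proof -
  have "R = 0"
  proof (rule ccontr)
    assume R: "R \<noteq> 0"
    have "E P x = - (E R x * y)" using assms by (simp add: eq_neg_iff_add_eq_0)
    then have "E P x ^ 2 = E R x ^ 2 * y ^ 2" by (simp add: power_mult_distrib)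
    then have "P ^ 2 - f * R ^ 2 = 0" using yf by (intro trans_E) simp
    then have "P ^ 2 = f * R ^ 2" by simp
    then show False using parity R by blast
  qed
  then show ?thesis using assms trans_E by simp
qed

lemma rep_ex: "\<exists>A B Q. Q \<noteq> 0 \<and> z = (E A x + E B x * y) / E Q x"
proof -
  have "z \<in> gen_subfield \<iota> {x, y}" using gen by simp
  then show ?thesis
  proof (induction z rule: gen_subfield.induct)
    case (const c)
    show ?case by (rule exI[of _ "[:c:]"], rule exI[of _ 0], rule exI[of _ 1]) simp
  next
    case (gen z)
    then show ?case
    proof
      assume "z = x" then show ?thesis
        by (intro exI[of _ "[:0,1:]"] exI[of _ 0] exI[of _ 1]) simp
    next
      assume "z \<in> {y}" then show ?thesis
        by (intro exI[of _ 0] exI[of _ 1] exI[of _ 1]) simp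
    qed
  next
    case (add z w)
    then obtain A B Q A' B' Q' where h: "Q \<noteq> 0" "z = (E A x + E B x * y) / E Q x"
      "Q' \<noteq> 0" "w = (E A' x + E B' x * y) / E Q' x" by blast
    then have q: "E Q x \<noteq> 0" "E Q' x \<noteq> 0" using trans_E by blast+
    have "z + w = (E (A * Q' + A' * Q) x + E (B * Q' + B' * Q) x * y) / E (Q * Q') x"
      unfolding h(2) h(4) E_add E_mult using frac_add[OF q, of "E A x" "E B x" y "E A' x" "E B' x"] .
    moreover have "Q * Q' \<noteq> 0" using h by simp
    ultimately show ?case by blast
  next
    case (mult z w)
    then obtain A B Q A' B' Q' where h: "Q \<noteq> 0" "z = (E A x + E B x * y) / E Q x"
      "Q' \<noteq> 0" "w = (E A' x + E B' x * y) / E Q' x" by blast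
    then have q: "E Q x \<noteq> 0" "E Q' x \<noteq> 0" using trans_E by blast+
    have "z * w = (E (A * A' + B * B' * f) x + E (A * B' + A' * B) x * y) / E (Q * Q') x"
      unfolding h(2) h(4) E_add E_mult using frac_mult[OF q yf, of "E A x" "E B x" "E A' x" "E B' x"] .
    moreover have "Q * Q' \<noteq> 0" using h by simp
    ultimately show ?case by blast
  next
    case (neg z)
    then obtain A B Q where h: "Q \<noteq> 0" "z = (E A x + E B x * y) / E Q x" by blast
    then show ?case
      by (intro exI[of _ "- A"] exI[of _ "- B"] exI[of _ Q]) (simp add: minus_divide_left)
  next
    case (inv z)
    then obtain A B Q where h: "Q \<noteq> 0" "z = (E A x + E B x * y) / E Q x" by blast
    show ?case
    proof (cases "z = 0")
      case True
      then show ?thesis by (intro exI[of _ 0] exI[of _ 0] exI[of _ 1]) simp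
    next
      case False
      have Qx: "E Q x \<noteq> 0" using h trans_E by blast
      have ab: "E A x + E B x * y \<noteq> 0" using False h by simp
      have N: "A ^ 2 - B ^ 2 * f \<noteq> 0"
      proof
        assume "A ^ 2 - B ^ 2 * f = 0"
        then have "A ^ 2 = f * B ^ 2" by (simp add: algebra_simps)
        then have "B = 0" by (rule parity)
        with \<open>A ^ 2 = f * B ^ 2\<close> have "A = 0" by simp
        with \<open>B = 0\<close> ab show False by simp
      qed
      then have Nx: "E (A ^ 2 - B ^ 2 * f) x \<noteq> 0" using trans_E by blast
      have Nx2: "E A x ^ 2 - E B x ^ 2 * E f x \<noteq> 0" using Nx by simp
      have "inverse z = (E (Q * A) x + E (- (Q * B)) x * y) / E (A ^ 2 - B ^ 2 * f) x"
      proof -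
        have "inverse ((E A x + E B x * y) / E Q x) = (E Q x * E A x + - (E Q x * E B x) * y) / (E A x ^ 2 - E B x ^ 2 * E f x)"
          by (rule frac_inv[OF Qx yf ab Nx2])
        then show ?thesis unfolding h(2) by simp
      qed
      then show ?thesis using N by blast
    qed
  qed
qed

end


context hyp begin
lemma Kx_rep: "z \<in> gen_subfield \<iota> {x} \<Longrightarrow> \<exists>A Q. Q \<noteq> 0 \<and> z = E A x / E Q x"
proof (induction z rule: gen_subfield.induct)
  case (const c)
  show ?case by (intro exI[of _ "[:c:]"] exI[of _ 1]) simp
next
  case (gen z)
  then show ?case by (intro exI[of _ "[:0,1:]"] exI[of _ 1]) simp
next
  case (add z w)
  then obtain A Q A' Q' where h: "Q \<noteq> 0" "z = E A x / E Q x" "Q' \<noteq> 0" "w = E A' x / E Q' x"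
    by blast
  then have q: "E Q x \<noteq> 0" "E Q' x \<noteq> 0" using trans_E by blast+
  have "z + w = E (A * Q' + A' * Q) x / E (Q * Q') x" unfolding h(2) h(4) E_add E_mult
    using add_frac_eq[OF q, of "E A x" "E A' x"] by (simp add: mult.commute)
  moreover have "Q * Q' \<noteq> 0" using h by simp
  ultimately show ?case by blast
next
  case (mult z w)
  then obtain A Q A' Q' where h: "Q \<noteq> 0" "z = E A x / E Q x" "Q' \<noteq> 0" "w = E A' x / E Q' x"
    by blast
  have "z * w = E (A * A') x / E (Q * Q') x" unfolding h(2) h(4) by simp
  moreover have "Q * Q' \<noteq> 0" using h by simp
  ultimately show ?case by (intro exI[of _ "A * A'"] exI[of _ "Q * Q'"] conjI)
next
  case (neg z)
  then obtain A Q where h: "Q \<noteq> 0" "z = E A x / E Q x" by blast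
  have "- z = E (- A) x / E Q x" unfolding h(2) by simp
  then show ?case using h(1) by (intro exI[of _ "- A"] exI[of _ Q] conjI)
next
  case (inv z)
  then obtain A Q where h: "Q \<noteq> 0" "z = E A x / E Q x" by blast
  show ?case
  proof (cases "A = 0")
    case True
    have "inverse z = E 0 x / E 1 x" unfolding h(2) True by simp
    then show ?thesis by (intro exI[of _ 0] exI[of _ 1] conjI) simp_all
  next
    case False
    have "inverse z = E Q x / E A x" unfolding h(2) by simp
    then show ?thesis using False by (intro exI[of _ Q] exI[of _ A] conjI)
  qed
qed

lemma y_notin_Kx: "y \<notin> gen_subfield \<iota> {x}"
proof
  assume "y \<in> gen_subfield \<iota> {x}"
  then obtain A Q where h: "Q \<noteq> 0" "y = E A x / E Q x" using Kx_rep by blast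
  then have "E Q x \<noteq> 0" using trans_E by blast
  then have "E A x + E (- Q) x * y = 0" using h by simp
  then have "- Q = 0" by (rule indep[THEN conjunct2])
  then show False using h(1) by simp
qed

definition rep :: "'L \<Rightarrow> 'k poly \<times> 'k poly \<times> 'k poly" where
  "rep z = (SOME (A, B, Q). Q \<noteq> 0 \<and> z = (E A x + E B x * y) / E Q x)"

definition phi :: "'L \<Rightarrow> 'L \<Rightarrow> 'L \<Rightarrow> 'L" where
  "phi w y' z = (case rep z of (A, B, Q) \<Rightarrow> (E A w + E B w * y') / E Q w)"

lemma rep_spec: assumes "rep z = (A, B, Q)" shows "Q \<noteq> 0" "z = (E A x + E B x * y) / E Q x"
proof -
  have "\<exists>p. (\<lambda>(A, B, Q). Q \<noteq> 0 \<and> z = (E A x + E B x * y) / E Q x) p"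
    using rep_ex by auto
  then have "(\<lambda>(A, B, Q). Q \<noteq> 0 \<and> z = (E A x + E B x * y) / E Q x) (rep z)"
    unfolding rep_def by (rule someI_ex)
  then show "Q \<noteq> 0" "z = (E A x + E B x * y) / E Q x" using assms by auto
qed

lemma phi_eq:
  assumes tw: "\<And>P. E P w = 0 \<Longrightarrow> P = 0" and Q: "Q \<noteq> 0"
    and z: "z = (E A x + E B x * y) / E Q x"
  shows "phi w y' z = (E A w + E B w * y') / E Q w"
proof -
  obtain A' B' Q' where r: "rep z = (A', B', Q')" by (cases "rep z") auto
  note s = rep_spec[OF r]
  have qx: "E Q x \<noteq> 0" "E Q' x \<noteq> 0" using Q s(1) trans_E by blast+
  have qw: "E Q w \<noteq> 0" "E Q' w \<noteq> 0" using Q s(1) tw by blast+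
  have "(E A x + E B x * y) / E Q x = (E A' x + E B' x * y) / E Q' x" using z s(2) by simp
  then have "(E A x + E B x * y) * E Q' x = (E A' x + E B' x * y) * E Q x"
    using qx by (simp add: frac_eq_eq)
  then have "E (A * Q' - A' * Q) x + E (B * Q' - B' * Q) x * y = 0"
    by (simp add: algebra_simps)
  then have "A * Q' - A' * Q = 0 \<and> B * Q' - B' * Q = 0" by (rule indep)
  then have e: "E A w * E Q' w = E A' w * E Q w" "E B w * E Q' w = E B' w * E Q w"
    by (metis E_mult eq_iff_diff_eq_0)+
  have "phi w y' z = (E A' w + E B' w * y') / E Q' w" by (simp add: phi_def r)
  also have "\<dots> = (E A w + E B w * y') / E Q w"
    using qw e by (simp add: frac_eq_eq algebra_simps)
  finally show ?thesis .
qed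

lemma phi_add:
  assumes tw: "\<And>P. E P w = 0 \<Longrightarrow> P = 0"
  shows "phi w y' (z1 + z2) = phi w y' z1 + phi w y' z2"
proof -
  obtain A B Q A' B' Q' where h: "Q \<noteq> 0" "z1 = (E A x + E B x * y) / E Q x"
      "Q' \<noteq> 0" "z2 = (E A' x + E B' x * y) / E Q' x" using rep_ex by meson
  then have q: "E Q x \<noteq> 0" "E Q' x \<noteq> 0" using trans_E by blast+
  have qw: "E Q w \<noteq> 0" "E Q' w \<noteq> 0" using h tw by blast+
  have "z1 + z2 = (E (A * Q' + A' * Q) x + E (B * Q' + B' * Q) x * y) / E (Q * Q') x"
    unfolding h(2) h(4) E_add E_mult using frac_add[OF q, of "E A x" "E B x" y "E A' x" "E B' x"] .
  then have "phi w y' (z1 + z2) = (E (A * Q' + A' * Q) w + E (B * Q' + B' * Q) w * y') / E (Q * Q') w"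
    using h by (intro phi_eq[OF tw]) simp_all
  also have "\<dots> = (E A w + E B w * y') / E Q w + (E A' w + E B' w * y') / E Q' w"
    unfolding E_add E_mult using frac_add[OF qw, of "E A w" "E B w" y' "E A' w" "E B' w"] by simp
  also have "\<dots> = phi w y' z1 + phi w y' z2"
    using phi_eq[OF tw h(1,2)] phi_eq[OF tw h(3,4)] by simp
  finally show ?thesis .
qed

lemma phi_mult:
  assumes tw: "\<And>P. E P w = 0 \<Longrightarrow> P = 0" and yw: "y' ^ 2 = E f w"
  shows "phi w y' (z1 * z2) = phi w y' z1 * phi w y' z2"
proof -
  obtain A B Q A' B' Q' where h: "Q \<noteq> 0" "z1 = (E A x + E B x * y) / E Q x"
      "Q' \<noteq> 0" "z2 = (E A' x + E B' x * y) / E Q' x" using rep_ex by meson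
  then have q: "E Q x \<noteq> 0" "E Q' x \<noteq> 0" using trans_E by blast+
  have qw: "E Q w \<noteq> 0" "E Q' w \<noteq> 0" using h tw by blast+
  have "z1 * z2 = (E (A * A' + B * B' * f) x + E (A * B' + A' * B) x * y) / E (Q * Q') x"
    unfolding h(2) h(4) E_add E_mult using frac_mult[OF q yf, of "E A x" "E B x" "E A' x" "E B' x"] .
  then have "phi w y' (z1 * z2) = (E (A * A' + B * B' * f) w + E (A * B' + A' * B) w * y') / E (Q * Q') w"
    using h by (intro phi_eq[OF tw]) simp_all
  also have "\<dots> = (E A w + E B w * y') / E Q w * ((E A' w + E B' w * y') / E Q' w)"
    unfolding E_add E_mult using frac_mult[OF qw yw, of "E A w" "E B w" "E A' w" "E B' w", symmetric] .
  also have "\<dots> = phi w y' z1 * phi w y' z2"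
    using phi_eq[OF tw h(1,2)] phi_eq[OF tw h(3,4)] by simp
  finally show ?thesis .
qed

lemma phi_const: assumes tw: "\<And>P. E P w = 0 \<Longrightarrow> P = 0" shows "phi w y' (\<iota> c) = \<iota> c"
  using phi_eq[OF tw, where Q=1 and z="\<iota> c" and A="[:c:]" and B=0 and y'=y'] by simp

lemma phi_x: assumes tw: "\<And>P. E P w = 0 \<Longrightarrow> P = 0" shows "phi w y' x = w"
  using phi_eq[OF tw, where Q=1 and z=x and A="[:0,1:]" and B=0 and y'=y'] by simp

lemma phi_y: assumes tw: "\<And>P. E P w = 0 \<Longrightarrow> P = 0" shows "phi w y' y = y'"
  using phi_eq[OF tw, where Q=1 and z=y and A=0 and B=1 and y'=y'] by simp


lemma trans_frac:
  assumes R0: "poly R 0 \<noteq> 0" and PE: "E P (E R x / x) = 0"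
  shows "P = 0"
proof (rule ccontr)
  assume P: "P \<noteq> 0"
  define d where "d = degree P"
  define Q where "Q = (\<Sum>i\<le>d. smult (coeff P i) (R ^ i * [:0,1:] ^ (d - i)))"
  have xnz: "x \<noteq> 0" by (rule x_nz)
  have "E Q x = (\<Sum>i\<le>d. \<iota> (coeff P i) * (E R x ^ i * x ^ (d - i)))"
    by (simp add: Q_def)
  also have "\<dots> = (\<Sum>i\<le>d. x ^ d * (\<iota> (coeff P i) * (E R x / x) ^ i))"
  proof (rule sum.cong)
    fix i assume "i \<in> {..d}"
    then have "x ^ d = x ^ i * x ^ (d - i)" by (simp add: power_add[symmetric])
    then show "\<iota> (coeff P i) * (E R x ^ i * x ^ (d - i)) = x ^ d * (\<iota> (coeff P i) * (E R x / x) ^ i)"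
      using xnz by (simp add: power_divide field_simps)
  qed simp
  also have "\<dots> = x ^ d * E P (E R x / x)"
    by (simp add: E_altdef d_def sum_distrib_left)
  finally have "E Q x = 0" using PE by simp
  then have "Q = 0" by (rule trans_E)
  moreover have "poly Q 0 = coeff P d * poly R 0 ^ d"
  proof -
    have "poly Q 0 = (\<Sum>i\<le>d. coeff P i * (poly R 0 ^ i * 0 ^ (d - i)))"
      by (simp add: Q_def poly_sum)
    also have "\<dots> = (\<Sum>i\<le>d. if i = d then coeff P d * poly R 0 ^ d else 0)"
      by (rule sum.cong) auto
    also have "\<dots> = coeff P d * poly R 0 ^ d" by simp
    finally show ?thesis .
  qed
  moreover have "coeff P d \<noteq> 0" using P by (simp add: d_def)
  ultimately show False using R0 by simp
qed

end

context emb begin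

definition khom :: "('L \<Rightarrow> 'L) \<Rightarrow> bool" where
  "khom s \<longleftrightarrow> (\<forall>a b. s (a + b) = s a + s b) \<and> (\<forall>a b. s (a * b) = s a * s b) \<and> (\<forall>c. s (\<iota> c) = \<iota> c)"

lemma K_aut_iff: "K_aut \<iota> s \<longleftrightarrow> bij s \<and> khom s"
  by (auto simp: K_aut_def khom_def)

context fixes s assumes h: "khom s" begin
lemma khom_add: "s (a + b) = s a + s b" using h by (simp add: khom_def)
lemma khom_mult: "s (a * b) = s a * s b" using h by (simp add: khom_def)
lemma khom_const: "s (\<iota> c) = \<iota> c" using h by (simp add: khom_def)
lemma khom_0: "s 0 = 0" using khom_const[of 0] by simp
lemma khom_1: "s 1 = 1" using khom_const[of 1] by simp
lemma khom_neg: "s (- a) = - s a"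
proof -
  have "s a + s (- a) = 0" using khom_add[of a "- a"] khom_0 by simp
  then show ?thesis by (metis minus_unique)
qed
lemma khom_diff: "s (a - b) = s a - s b"
  using khom_add[of a "- b"] khom_neg[of b] by simp
lemma khom_inverse: "s (inverse a) = inverse (s a)"
proof (cases "a = 0")
  case True then show ?thesis by (simp add: khom_0)
next
  case False
  then have "s a * s (inverse a) = 1" using khom_mult[of a "inverse a"] khom_1 by simp
  then show ?thesis by (metis inverse_unique)
qed
lemma khom_divide: "s (a / b) = s a / s b"
  by (simp add: divide_inverse khom_mult khom_inverse)
lemma khom_power: "s (a ^ n) = s a ^ n"
  by (induction n) (simp_all add: khom_1 khom_mult)
lemma khom_eq0: "s a = 0 \<longleftrightarrow> a = 0"
proof
  assume "s a = 0"
  show "a = 0"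
  proof (rule ccontr)
    assume "a \<noteq> 0"
    then have "s (a * inverse a) = 1" using khom_1 by simp
    then show False using \<open>s a = 0\<close> khom_mult by simp
  qed
qed (simp add: khom_0)
lemma khom_inj: "inj s"
proof (rule injI)
  fix a b assume "s a = s b"
  then have "s (a - b) = 0" by (simp add: khom_diff)
  then show "a = b" using khom_eq0 by simp
qed
lemma khom_fix: assumes "z \<in> gen_subfield \<iota> S" "\<And>z. z \<in> S \<Longrightarrow> s z = z" shows "s z = z"
  using assms(1)
proof (induction z rule: gen_subfield.induct)
qed (simp_all add: assms(2) khom_const khom_add khom_mult khom_neg khom_inverse)
end

lemma khom_comp: "khom s \<Longrightarrow> khom t \<Longrightarrow> khom (s \<circ> t)"
  by (simp add: khom_def)

end

context hyp begin

lemma phi_khom: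
  assumes tw: "\<And>P. E P w = 0 \<Longrightarrow> P = 0" and yw: "y' ^ 2 = E f w"
  shows "khom (phi w y')"
  unfolding khom_def using phi_add[OF tw] phi_mult[OF tw yw] phi_const[OF tw] by blast

lemma phi_invol:
  assumes tw: "\<And>P. E P w = 0 \<Longrightarrow> P = 0" and yw: "y' ^ 2 = E f w"
    and ww: "phi w y' w = x" and yy: "phi w y' y' = y"
  shows "phi w y' \<circ> phi w y' = id" "K_aut \<iota> (phi w y')"
proof -
  let ?s = "phi w y'"
  have k: "khom ?s" by (rule phi_khom[OF tw yw])
  have k2: "khom (?s \<circ> ?s)" by (rule khom_comp[OF k k])
  have "(?s \<circ> ?s) z = z" for z
  proof (rule khom_fix[OF k2])
    show "z \<in> gen_subfield \<iota> {x, y}" using gen by simp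
    fix z assume "z \<in> {x, y}"
    then show "(?s \<circ> ?s) z = z" using phi_x[OF tw] phi_y[OF tw] ww yy by auto
  qed
  then show i: "?s \<circ> ?s = id" by auto
  have "bij ?s" using o_bij[OF i i] .
  then show "K_aut \<iota> ?s" using k by (simp add: K_aut_iff)
qed


lemma gen_sub: assumes "z \<in> gen_subfield \<iota> S" "\<And>z. z \<in> S \<Longrightarrow> z \<in> gen_subfield \<iota> T"
  shows "z \<in> gen_subfield \<iota> T"
  using assms(1)
  by (induction z rule: gen_subfield.induct) (auto intro: gen_subfield.intros assms(2))

end


context hyp begin
lemma quotient:
  assumes t: "K_aut \<iota> t" and \<alpha>: "\<alpha> \<noteq> 0" and tx: "t x = \<iota> \<alpha> / x"
    and v: "v = y * r" and r: "r \<in> gen_subfield \<iota> {x}" and rnz: "r \<noteq> 0"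
    and tv: "t v = v" and vh: "v ^ 2 = E h (x + \<iota> \<alpha> / x)"
  shows "quotient_given_by \<iota> t h"
proof -
  define u where "u = x + \<iota> \<alpha> / x"
  define M where "M = gen_subfield \<iota> {u, v}"
  have k: "khom t" and bt: "bij t" using t by (auto simp: K_aut_iff)
  have xnz: "x \<noteq> 0" by (rule x_nz)
  have a0: "\<iota> \<alpha> \<noteq> 0" using \<alpha> by simp
  have tu: "t u = u" unfolding u_def
    using xnz a0 by (simp add: khom_add[OF k] khom_divide[OF k] khom_const[OF k] tx)
  have Mfix: "t z = z" if "z \<in> M" for z
    using that unfolding M_def by (rule khom_fix[OF k]) (auto simp: tu tv)
  have Mc: "\<iota> c \<in> M" for c unfolding M_def by (rule gen_subfield.const)
  have M0: "0 \<in> M" using Mc[of 0] by simp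
  have M1: "1 \<in> M" using Mc[of 1] by simp
  have Mu: "u \<in> M" unfolding M_def by (rule gen_subfield.gen) simp
  have Mv: "v \<in> M" unfolding M_def by (rule gen_subfield.gen) simp
  have Madd: "a + b \<in> M" if "a \<in> M" "b \<in> M" for a b
    using that unfolding M_def by (rule gen_subfield.add)
  have Mmult: "a * b \<in> M" if "a \<in> M" "b \<in> M" for a b
    using that unfolding M_def by (rule gen_subfield.mult)
  have Mneg: "- a \<in> M" if "a \<in> M" for a
    using that unfolding M_def by (rule gen_subfield.neg)
  have Minv: "inverse a \<in> M" if "a \<in> M" for a
    using that unfolding M_def by (rule gen_subfield.inv)
  have Mdiv: "a / b \<in> M" if "a \<in> M" "b \<in> M" for a b
    using Mmult[OF that(1) Minv[OF that(2)]] by (simp add: divide_inverse)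
  define S where "S = {z. \<exists>m1 m2. m1 \<in> M \<and> m2 \<in> M \<and> z = m1 + m2 * x}"
  have SI: "m1 + m2 * x \<in> S" if "m1 \<in> M" "m2 \<in> M" for m1 m2
    using that unfolding S_def by blast
  have SE: "\<exists>m1 m2. m1 \<in> M \<and> m2 \<in> M \<and> z = m1 + m2 * x" if "z \<in> S" for z
    using that unfolding S_def by blast
  have SM: "m \<in> S" if "m \<in> M" for m using SI[OF that M0] by simp
  have Sx: "x \<in> S" using SI[OF M0 M1] by simp
  have Sadd: "a + b \<in> S" if ha: "a \<in> S" "b \<in> S" for a b
  proof -
    obtain m1 m2 n1 n2 where h: "m1 \<in> M" "m2 \<in> M" "a = m1 + m2 * x"
      "n1 \<in> M" "n2 \<in> M" "b = n1 + n2 * x" using SE[OF ha(1)] SE[OF ha(2)] by blast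
    have "a + b = (m1 + n1) + (m2 + n2) * x" using h by (simp add: algebra_simps)
    then show ?thesis using SI[OF Madd[OF h(1,4)] Madd[OF h(2,5)]] by simp
  qed
  have Sneg: "- a \<in> S" if ha: "a \<in> S" for a
  proof -
    obtain m1 m2 where h: "m1 \<in> M" "m2 \<in> M" "a = m1 + m2 * x" using SE[OF ha] by blast
    have "- a = (- m1) + (- m2) * x" using h by simp
    then show ?thesis using SI[OF Mneg[OF h(1)] Mneg[OF h(2)]] by simp
  qed
  have xx: "x * x = u * x - \<iota> \<alpha>" unfolding u_def using xnz by (simp add: algebra_simps)
  have Smult: "a * b \<in> S" if ha: "a \<in> S" "b \<in> S" for a b
  proof -
    obtain m1 m2 n1 n2 where h: "m1 \<in> M" "m2 \<in> M" "a = m1 + m2 * x"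
      "n1 \<in> M" "n2 \<in> M" "b = n1 + n2 * x" using SE[OF ha(1)] SE[OF ha(2)] by blast
    have "a * b = m1 * n1 + (m1 * n2 + m2 * n1) * x + m2 * n2 * (x * x)"
      using h by (simp add: algebra_simps)
    also have "\<dots> = (m1 * n1 - m2 * n2 * \<iota> \<alpha>) + (m1 * n2 + m2 * n1 + m2 * n2 * u) * x"
      unfolding xx by (simp add: algebra_simps)
    finally have ab: "a * b = (m1 * n1 - m2 * n2 * \<iota> \<alpha>) + (m1 * n2 + m2 * n1 + m2 * n2 * u) * x" .
    have A: "m1 * n1 - m2 * n2 * \<iota> \<alpha> \<in> M"
      using Madd[OF Mmult[OF h(1) h(4)] Mneg[OF Mmult[OF Mmult[OF h(2) h(5)] Mc]]] by simp
    have B: "m1 * n2 + m2 * n1 + m2 * n2 * u \<in> M" by (intro Madd Mmult h Mu)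
    show ?thesis unfolding ab by (rule SI[OF A B])
  qed
  have tS: "t (m1 + m2 * x) = m1 + m2 * (u - x)" if "m1 \<in> M" "m2 \<in> M" for m1 m2
  proof -
    have "t x = u - x" unfolding tx u_def by simp
    then show ?thesis using Mfix[OF that(1)] Mfix[OF that(2)] by (simp add: khom_add[OF k] khom_mult[OF k])
  qed
  have Sinv: "inverse a \<in> S" if ha: "a \<in> S" for a
  proof (cases "a = 0")
    case True then show ?thesis using SM[OF M0] by simp
  next
    case False
    obtain m1 m2 where h: "m1 \<in> M" "m2 \<in> M" "a = m1 + m2 * x" using SE[OF ha] by blast
    have ta: "t a \<noteq> 0" using False khom_eq0[OF k] by simp
    define N where "N = m1 * m1 + m1 * m2 * u + m2 * m2 * \<iota> \<alpha>"
    have NM: "N \<in> M" unfolding N_def by (simp add: Madd Mmult Mc Mu h)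
    have "a * t a = m1 * m1 + m1 * m2 * u + m2 * m2 * (u * x - x * x)"
      unfolding tS[OF h(1,2)] h(3) by (simp add: algebra_simps)
    also have "\<dots> = N" unfolding N_def by (simp add: xx)
    finally have aN: "a * t a = N" .
    have Nnz: "N \<noteq> 0" using aN False ta by auto
    have "inverse a = t a / (a * t a)" using False ta by (simp add: field_simps)
    also have "\<dots> = (m1 + m2 * u) / N + (- m2 / N) * x"
      using Nnz unfolding aN unfolding tS[OF h(1,2)] h(3) by (simp add: field_simps)
    finally show ?thesis
      using SI[OF Mdiv[OF Madd[OF h(1) Mmult[OF h(2) Mu]] NM] Mdiv[OF Mneg[OF h(2)] NM]] by simp
  qed
  have KxS: "z \<in> S" if "z \<in> gen_subfield \<iota> {x}" for z
    using that
    by (induction z rule: gen_subfield.induct) (auto intro: SM Mc Sx Sadd Smult Sneg Sinv)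
  have yv: "y = v * inverse r" using v rnz by simp
  have Sy: "y \<in> S" unfolding yv by (rule Smult[OF SM[OF Mv] Sinv[OF KxS[OF r]]])
  have allS: "z \<in> S" for z
  proof -
    have "z \<in> gen_subfield \<iota> {x, y}" using gen by simp
    then show ?thesis
      by (induction z rule: gen_subfield.induct) (auto intro: SM Mc Sx Sy Sadd Smult Sneg Sinv)
  qed
  have ux: "u - x - x \<noteq> 0"
  proof
    assume "u - x - x = 0"
    then have "\<iota> \<alpha> / x = x" unfolding u_def by simp
    then have "x * x - \<iota> \<alpha> = 0" using xnz by (simp add: field_simps)
    then have "E [:- \<alpha>, 0, 1:] x = 0" by (simp add: algebra_simps)
    then have "[:- \<alpha>, 0, 1:] = 0" by (rule trans_E)
    then show False by simp
  qed
  have fixM: "{z. t z = z} = M"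
  proof
    show "M \<subseteq> {z. t z = z}" using Mfix by blast
    show "{z. t z = z} \<subseteq> M"
    proof
      fix z assume "z \<in> {z. t z = z}"
      then have tz: "t z = z" by simp
      obtain m1 m2 where h: "m1 \<in> M" "m2 \<in> M" "z = m1 + m2 * x" using SE[OF allS] by blast
      have "m2 * (u - x - x) = 0" using tz unfolding h(3) tS[OF h(1,2)] by (simp add: algebra_simps)
      then have "m2 = 0" using ux by simp
      then show "z \<in> M" using h by simp
    qed
  qed
  have ueq: "u = E [:\<alpha>, 0, 1:] x / x" unfolding u_def using xnz by (simp add: field_simps power2_eq_square)
  have tru: "transcendental_over \<iota> u"
    unfolding transcendental_over_def evalp_E ueq
    using trans_frac[of "[:\<alpha>, 0, 1:]"] \<alpha> by auto
  have xK: "x \<in> gen_subfield \<iota> {x}" by (rule gen_subfield.gen) simp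
  have uKx: "u \<in> gen_subfield \<iota> {x}" unfolding u_def divide_inverse
    by (intro gen_subfield.add gen_subfield.mult gen_subfield.inv gen_subfield.const xK)
  have vnot: "v \<notin> gen_subfield \<iota> {u}"
  proof
    assume "v \<in> gen_subfield \<iota> {u}"
    then have "v \<in> gen_subfield \<iota> {x}" by (rule gen_sub) (use uKx in auto)
    then have "y \<in> gen_subfield \<iota> {x}" unfolding yv by (intro gen_subfield.mult gen_subfield.inv r)
    then show False using y_notin_Kx by simp
  qed
  show ?thesis unfolding quotient_given_by_def
    using tu tv fixM tru vnot vh
    by (intro exI[of _ u] exI[of _ v]) (simp add: M_def evalp_E u_def)
qed

end



definition dc :: "nat \<Rightarrow> nat \<Rightarrow> nat" where
  "dc m i = (m * ((m - i) choose i)) div (m - i)"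

definition cf :: "'k::field \<Rightarrow> nat \<Rightarrow> nat \<Rightarrow> 'k" where
  "cf \<alpha> m j = (if j \<le> m \<and> even (m - j) then of_nat (dc m ((m - j) div 2)) * (- \<alpha>) ^ ((m - j) div 2) else 0)"

lemma coeff_dickson: "coeff (dickson m \<alpha>) j = cf \<alpha> m j"
proof -
  have eq: "(m - 2 * i = j) \<longleftrightarrow> (j \<le> m \<and> even (m - j) \<and> i = (m - j) div 2)" if "i \<le> m div 2" for i
  proof -
    have "2 * (m div 2) \<le> m" by simp
    then have le: "2 * i \<le> m" using that by linarith
    show ?thesis
    proof
      assume h: "m - 2 * i = j"
      then have "m - j = 2 * i" using le by simp
      then show "j \<le> m \<and> even (m - j) \<and> i = (m - j) div 2" using h by simp
    next
      assume h: "j \<le> m \<and> even (m - j) \<and> i = (m - j) div 2"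
      then have ev: "even (m - j)" and ii: "i = (m - j) div 2" by blast+
      have "m - j = 2 * i" unfolding ii using even_two_times_div_two[OF ev] by simp
      then show "m - 2 * i = j" using h by simp
    qed
  qed
  have "coeff (dickson m \<alpha>) j = (\<Sum>i\<le>m div 2. if m - 2 * i = j then of_nat (dc m i) * (- \<alpha>) ^ i else 0)"
    unfolding dickson_def dc_def by (simp add: coeff_sum coeff_monom)
  also have "\<dots> = (\<Sum>i\<le>m div 2. if i = (m - j) div 2 then (if j \<le> m \<and> even (m - j) then of_nat (dc m i) * (- \<alpha>) ^ i else 0) else 0)"
    by (rule sum.cong) (auto simp: eq)
  also have "\<dots> = cf \<alpha> m j"
    by (subst sum.delta) (auto simp: cf_def)
  finally show ?thesis .
qed

lemma dc0: "m \<ge> 1 \<Longrightarrow> dc m 0 = 1"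
  by (simp add: dc_def)

lemma dcS: assumes "n = N + k" "N = Suc N'" "k = Suc k'"
  shows "dc n k = (N choose k) + (N' choose k')"
proof -
  have a: "Suc k' * (Suc N' choose Suc k') = Suc N' * (N' choose k')"
    by (rule Suc_times_binomial)
  have b: "k * (N choose k) = N * (N' choose k')" using a assms(2,3) by simp
  have "n * (N choose k) = N * (N choose k) + k * (N choose k)"
    using assms(1) by (simp add: add_mult_distrib)
  also have "\<dots> = N * ((N choose k) + (N' choose k'))" using b by (simp add: distrib_left)
  finally have e: "n * (N choose k) = N * ((N choose k) + (N' choose k'))" .
  have nk: "n - k = N" using assms by simp
  have N0: "N > 0" using assms by simp
  show ?thesis unfolding dc_def nk e using N0 by simp
qed

lemma dc_top: "i \<ge> 1 \<Longrightarrow> dc (2 * i) i = 2"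
  by (simp add: dc_def mult_2)

lemma dc_rec: assumes "1 \<le> i" "2 * i \<le> m + 1"
  shows "dc (m + 2) i = dc (m + 1) i + dc m (i - 1)"
proof -
  obtain k where k: "i = Suc k" using assms by (cases i) auto
  define l where "l = m - (2 * k + 1)"
  have l: "m = 2 * k + 1 + l" using assms k unfolding l_def by simp
  have A: "dc (m + 2) i = ((k + 2 + l) choose i) + ((k + 1 + l) choose k)"
    by (rule dcS[where N'="k + 1 + l"]) (simp_all add: k l)
  have B: "dc (m + 1) i = ((k + 1 + l) choose i) + ((k + l) choose k)"
    by (rule dcS[where N'="k + l"]) (simp_all add: k l)
  show ?thesis
  proof (cases k)
    case 0
    then show ?thesis using A B k l by (simp add: dc0)
  next
    case (Suc k')
    have C: "dc m k = ((k + 1 + l) choose k) + ((k + l) choose k')"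
      by (rule dcS[where N'="k + l"]) (simp_all add: k l Suc)
    show ?thesis using A B C by (simp add: k Suc)
  qed
qed


lemma cf_rec: assumes m: "m \<ge> 1"
  shows "cf \<alpha> (m + 2) j = (if j = 0 then 0 else cf \<alpha> (m + 1) (j - 1)) - \<alpha> * cf \<alpha> m j"
proof (cases "j \<le> m + 2 \<and> even (m + 2 - j)")
  case False
  have n2: "\<not> (j - 1 \<le> m + 1 \<and> even (m + 1 - (j - 1)))" if "j \<noteq> 0"
  proof
    assume h: "j - 1 \<le> m + 1 \<and> even (m + 1 - (j - 1))"
    then have "m + 1 - (j - 1) = m + 2 - j" using that by simp
    then show False using h False that by simp
  qed
  have n3: "\<not> (j \<le> m \<and> even (m - j))"
  proof
    assume h: "j \<le> m \<and> even (m - j)"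
    then have "m + 2 - j = (m - j) + 2" by (simp add: Suc_diff_le)
    then show False using h False by simp
  qed
  have z1: "cf \<alpha> (m + 2) j = 0" unfolding cf_def using False by (rule if_not_P)
  have z2: "cf \<alpha> (m + 1) (j - 1) = 0" if "j \<noteq> 0" unfolding cf_def using n2[OF that] by (rule if_not_P)
  have z3: "cf \<alpha> m j = 0" unfolding cf_def using n3 by (rule if_not_P)
  show ?thesis using z1 z2 z3 by simp
next
  case True
  then have "even (m + 2 - j)" by (rule conjunct2)
  then obtain i where i0: "m + 2 - j = 2 * i" by (rule evenE)
  then have i: "m + 2 = j + 2 * i" using True by simp
  have L: "cf \<alpha> (m + 2) j = of_nat (dc (m + 2) i) * (- \<alpha>) ^ i"
    using i by (simp add: cf_def)
  show ?thesis
  proof (cases "i = 0")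
    case True
    then have j: "j = m + 2" using i by simp
    have "cf \<alpha> (m + 1) (j - 1) = 1" using j m by (simp add: cf_def dc0)
    moreover have "cf \<alpha> m j = 0" using j by (simp add: cf_def)
    ultimately show ?thesis using L True j m by (simp add: dc0)
  next
    case False
    show ?thesis
    proof (cases "j = 0")
      case True
      then have mi: "m = 2 * (i - 1)" "i \<ge> 2" using i m False by auto
      have "cf \<alpha> m j = of_nat (dc m (i - 1)) * (- \<alpha>) ^ (i - 1)"
        using True mi by (simp add: cf_def)
      moreover have "dc (m + 2) i = 2" using i True False dc_top[of i] by simp
      moreover have "dc m (i - 1) = 2" using mi dc_top[of "i - 1"] by simp
      moreover have "(- \<alpha>) ^ i = - \<alpha> * (- \<alpha>) ^ (i - 1)" using False
        by (metis power_eq_if)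
      ultimately show ?thesis using L True by simp
    next
      case j0: False
      have c1: "cf \<alpha> (m + 1) (j - 1) = of_nat (dc (m + 1) i) * (- \<alpha>) ^ i"
        using i j0 by (simp add: cf_def)
      have mj: "j \<le> m" "m - j = 2 * (i - 1)" using i j0 False by auto
      then have mj2: "j \<le> m \<and> even (m - j)" "(m - j) div 2 = i - 1" by auto
      have c2: "cf \<alpha> m j = of_nat (dc m (i - 1)) * (- \<alpha>) ^ (i - 1)"
        unfolding cf_def if_P[OF mj2(1)] mj2(2) ..
      have r: "dc (m + 2) i = dc (m + 1) i + dc m (i - 1)"
        by (rule dc_rec) (use i j0 False in auto)
      have p: "(- \<alpha>) ^ i = - \<alpha> * (- \<alpha>) ^ (i - 1)" using False
        by (metis power_eq_if)
      show ?thesis using L c1 c2 r p j0 by (simp add: algebra_simps)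
    qed
  qed
qed

lemma dickson_rec: assumes "m \<ge> 1"
  shows "dickson (m + 2) \<alpha> = pCons 0 (dickson (m + 1) \<alpha>) - smult \<alpha> (dickson m \<alpha>)"
proof (rule poly_eqI)
  fix j
  show "coeff (dickson (m + 2) \<alpha>) j = coeff (pCons 0 (dickson (m + 1) \<alpha>) - smult \<alpha> (dickson m \<alpha>)) j"
    using cf_rec[OF assms, of \<alpha> j] by (cases j) (simp_all add: coeff_dickson)
qed

lemma dickson1: "dickson 1 \<alpha> = [:0, 1:]"
  by (rule poly_eqI) (simp add: coeff_dickson cf_def dc_def coeff_pCons split: nat.splits)

lemma dickson2: "dickson 2 \<alpha> = [:- 2 * \<alpha>, 0, 1:]"
proof (rule poly_eqI)
  fix j
  show "coeff (dickson 2 \<alpha>) j = coeff [:- 2 * \<alpha>, 0, 1:] j"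
  proof (cases "j \<le> 2")
    case True
    then have "j = 0 \<or> j = 1 \<or> j = 2" by auto
    then show ?thesis by (auto simp: coeff_dickson cf_def dc_def numeral_2_eq_2)
  next
    case False
    then show ?thesis by (simp add: coeff_dickson cf_def coeff_pCons split: nat.splits)
  qed
qed


lemma (in emb) E_dickson:
  assumes st: "s * t = \<iota> \<alpha>"
  shows "m \<ge> 1 \<Longrightarrow> E (dickson m \<alpha>) (s + t) = s ^ m + t ^ m"
proof (induction m rule: less_induct)
  case (less m)
  show ?case
  proof (cases "m \<le> 2")
    case True
    then have "m = 1 \<or> m = 2" using less.prems by auto
    then show ?thesis
    proof
      assume m1: "m = 1"
      have "E (dickson 1 \<alpha>) (s + t) = s + t" unfolding dickson1 by simp
      then show ?thesis using m1 by simp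
    next
      assume m2: "m = 2"
      have "E (dickson 2 \<alpha>) (s + t) = (s + t) ^ 2 - 2 * (s * t)"
        unfolding st by (simp add: dickson2 power2_eq_square algebra_simps)
      also have "\<dots> = s ^ 2 + t ^ 2" by (simp add: power2_eq_square algebra_simps)
      finally show ?thesis using m2 by simp
    qed
  next
    case False
    define k where "k = m - 2"
    have k: "m = k + 2" "k \<ge> 1" using False unfolding k_def by auto
    have IH1: "E (dickson (k + 1) \<alpha>) (s + t) = s ^ (k + 1) + t ^ (k + 1)"
      using less.IH[of "k + 1"] k by simp
    have IH0: "E (dickson k \<alpha>) (s + t) = s ^ k + t ^ k"
      using less.IH[of k] k by simp
    have "E (dickson m \<alpha>) (s + t) = (s + t) * (s ^ (k + 1) + t ^ (k + 1)) - (s * t) * (s ^ k + t ^ k)"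
      unfolding k(1) dickson_rec[OF k(2)] using IH1 IH0 st by simp
    also have "\<dots> = s ^ (k + 2) + t ^ (k + 2)" by (simp add: algebra_simps)
    finally show ?thesis using k by simp
  qed
qed




lemma yw_gen: fixes X A Y a C :: "'a::field"
  assumes X: "X \<noteq> 0" and C: "C ^ 2 = A ^ (g + 1)"
    and Y: "Y ^ 2 = X ^ (2 * g + 1) + a * X ^ (g + 1) + A ^ g * X"
  shows "(Y * C / X ^ (g + 1)) ^ 2 = (A / X) ^ (2 * g + 1) + a * (A / X) ^ (g + 1) + A ^ g * (A / X)"
proof -
  define P where "P = X ^ g"
  define Q where "Q = A ^ g"
  have P: "P \<noteq> 0" using X by (simp add: P_def)
  have e1: "X ^ (2 * g + 1) = P * P * X" by (simp add: P_def power_add power_mult_distrib mult_2 )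
  have e2: "X ^ (g + 1) = P * X" by (simp add: P_def)
  have e3: "A ^ (g + 1) = Q * A" by (simp add: Q_def)
  have e4: "A ^ (2 * g + 1) = Q * Q * A" by (simp add: Q_def power_add mult_2)
  have "(Y * C / X ^ (g + 1)) ^ 2 = Y ^ 2 * C ^ 2 / (X ^ (g + 1)) ^ 2"
    by (simp add: power_mult_distrib power_divide)
  also have "\<dots> = (P * P * X + a * (P * X) + Q * X) * (Q * A) / (P * X) ^ 2"
    unfolding Y C e1 e2 e3 Q_def by simp
  also have "\<dots> = (Q * Q * A) / (P * P * X) + a * ((Q * A) / (P * X)) + Q * (A / X)"
    using P X by (simp add: field_simps power2_eq_square)
  also have "\<dots> = (A / X) ^ (2 * g + 1) + a * (A / X) ^ (g + 1) + A ^ g * (A / X)"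
    unfolding power_divide e1 e2 e3 e4 Q_def by simp
  finally show ?thesis .
qed

lemma invol_gen: fixes X A Y C :: "'a::field"
  assumes X: "X \<noteq> 0" and A: "A \<noteq> 0" and C: "C ^ 2 = A ^ (g + 1)"
  shows "(Y * C / X ^ (g + 1)) * C / (A / X) ^ (g + 1) = Y"
proof -
  have "(Y * C / X ^ (g + 1)) * C / (A / X) ^ (g + 1) = Y * C ^ 2 / A ^ (g + 1)"
    using X A by (simp add: power_divide field_simps power2_eq_square)
  then show ?thesis using C A by simp
qed

lemma o_sv: fixes X A Y C :: "'a::field"
  assumes X: "X \<noteq> 0" and A: "A \<noteq> 0" and gk: "g + 1 = 2 * k" and C: "C = A ^ k"
  shows "(Y * C / X ^ (g + 1)) * inverse ((A / X) ^ k) = Y * inverse (X ^ k)"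
proof -
  have "X ^ (g + 1) = X ^ k * X ^ k" unfolding gk by (simp add: mult_2 power_add)
  then show ?thesis using X A unfolding C by (simp add: power_divide field_simps)
qed

lemma o_tv: fixes X A Y C :: "'a::field"
  assumes X: "X \<noteq> 0" and A: "A \<noteq> 0" and gk: "g + 1 = 2 * k" and C: "C = A ^ k"
  shows "- (Y * C / X ^ (g + 1)) * ((A / X - A / (A / X)) * inverse ((A / X) ^ k)) = Y * ((X - A / X) * inverse (X ^ k))"
proof -
  have "X ^ (g + 1) = X ^ k * X ^ k" unfolding gk by (simp add: mult_2 power_add)
  then show ?thesis using X A unfolding C by (simp add: power_divide field_simps)
qed

lemma base_v2: fixes X A Y a :: "'a::field"
  assumes X: "X \<noteq> 0" and Y: "Y ^ 2 = X ^ (2 * g + 1) + a * X ^ (g + 1) + A ^ g * X"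
  shows "Y ^ 2 / X ^ (g + 1) = X ^ g + (A / X) ^ g + a"
proof -
  define P where "P = X ^ g"
  have P: "P \<noteq> 0" using X by (simp add: P_def)
  have e1: "X ^ (2 * g + 1) = P * P * X" by (simp add: P_def power_add mult_2)
  have e2: "X ^ (g + 1) = P * X" by (simp add: P_def)
  show ?thesis unfolding Y e1 e2 power_divide P_def[symmetric] using P X
    by (simp add: field_simps)
qed

lemma o_v2: fixes X A Y a :: "'a::field"
  assumes X: "X \<noteq> 0" and gk: "g + 1 = 2 * k" and Y: "Y ^ 2 = X ^ (2 * g + 1) + a * X ^ (g + 1) + A ^ g * X"
  shows "(Y * inverse (X ^ k)) ^ 2 = X ^ g + (A / X) ^ g + a"
proof -
  have "(Y * inverse (X ^ k)) ^ 2 = Y ^ 2 / X ^ (g + 1)"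
    unfolding gk by (simp add: power_mult_distrib power_mult power_inverse divide_inverse mult.commute)
  then show ?thesis using base_v2[OF X Y] by simp
qed

lemma o_v2': fixes X A Y a :: "'a::field"
  assumes X: "X \<noteq> 0" and gk: "g + 1 = 2 * k" and Y: "Y ^ 2 = X ^ (2 * g + 1) + a * X ^ (g + 1) + A ^ g * X"
  shows "(Y * ((X - A / X) * inverse (X ^ k))) ^ 2 = ((X + A / X) ^ 2 - 4 * A) * (X ^ g + (A / X) ^ g + a)"
proof -
  have "(Y * ((X - A / X) * inverse (X ^ k))) ^ 2 = (X - A / X) ^ 2 * (Y * inverse (X ^ k)) ^ 2"
    by (simp add: power_mult_distrib)
  also have "(X - A / X) ^ 2 = (X + A / X) ^ 2 - 4 * A" using X by (simp add: power2_eq_square field_simps)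
  finally show ?thesis using o_v2[OF X gk Y] by simp
qed

lemma e_sv: fixes X B Y C :: "'a::field"
  assumes X: "X \<noteq> 0" and B: "B \<noteq> 0" and gn: "g = 2 * n" and C: "C = B ^ (g + 1)"
  shows "(Y * C / X ^ (g + 1)) * ((B ^ 2 / X + B) * inverse ((B ^ 2 / X) ^ (n + 1))) = Y * ((X + B) * inverse (X ^ (n + 1)))"
proof -
  define P where "P = X ^ n"
  define R where "R = B ^ n"
  have P: "P \<noteq> 0" using X by (simp add: P_def)
  have R: "R \<noteq> 0" using B by (simp add: R_def)
  have e1: "X ^ (g + 1) = P * P * X" unfolding gn P_def by (simp add: power_add mult_2)
  have e2: "C = R * R * B" unfolding C gn R_def by (simp add: power_add mult_2)
  have e3: "(B ^ 2 / X) ^ (n + 1) = R * R * B * B / (P * X)"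
    unfolding R_def P_def by (simp add: power_divide power_mult_distrib power2_eq_square power_add mult_ac)
  have e4: "X ^ (n + 1) = P * X" by (simp add: P_def)
  show ?thesis unfolding e1 e2 e3 e4 using P R X B by (simp add: field_simps power2_eq_square)
qed

lemma e_tv: fixes X B Y C :: "'a::field"
  assumes X: "X \<noteq> 0" and B: "B \<noteq> 0" and gn: "g = 2 * n" and C: "C = B ^ (g + 1)"
  shows "- (Y * C / X ^ (g + 1)) * ((B ^ 2 / X - B) * inverse ((B ^ 2 / X) ^ (n + 1))) = Y * ((X - B) * inverse (X ^ (n + 1)))"
proof -
  define P where "P = X ^ n"
  define R where "R = B ^ n"
  have P: "P \<noteq> 0" using X by (simp add: P_def)
  have R: "R \<noteq> 0" using B by (simp add: R_def)
  have e1: "X ^ (g + 1) = P * P * X" unfolding gn P_def by (simp add: power_add mult_2)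
  have e2: "C = R * R * B" unfolding C gn R_def by (simp add: power_add mult_2)
  have e3: "(B ^ 2 / X) ^ (n + 1) = R * R * B * B / (P * X)"
    unfolding R_def P_def by (simp add: power_divide power_mult_distrib power2_eq_square power_add mult_ac)
  have e4: "X ^ (n + 1) = P * X" by (simp add: P_def)
  show ?thesis unfolding e1 e2 e3 e4 using P R X B by (simp add: field_simps power2_eq_square)
qed

lemma e_v2: fixes X B Y a :: "'a::field"
  assumes X: "X \<noteq> 0" and gn: "g = 2 * n" and Y: "Y ^ 2 = X ^ (2 * g + 1) + a * X ^ (g + 1) + (B^2) ^ g * X"
    and that: "s * s = 1"
  shows "(Y * ((X + s * B) * inverse (X ^ (n + 1)))) ^ 2 = ((X + B^2 / X) + 2 * s * B) * (X ^ g + (B^2 / X) ^ g + a)"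
proof -
  have "X ^ (n + 1) * X ^ (n + 1) = X ^ (g + 1) * X" unfolding gn by (simp add: power_add mult_2)
  then have "(Y * ((X + s * B) * inverse (X ^ (n + 1)))) ^ 2 = (X + s * B) ^ 2 / X * (Y ^ 2 / X ^ (g + 1))"
    using X by (simp add: power_mult_distrib power2_eq_square field_simps)
  also have "(X + s * B) ^ 2 / X = (X + B^2 / X) + 2 * s * B" using X that
    by (simp add: power2_eq_square field_simps)
  finally show ?thesis using base_v2[OF X Y] by (simp only:)
qed




lemma (in emb) gen_pow: "z \<in> gen_subfield \<iota> S \<Longrightarrow> z ^ n \<in> gen_subfield \<iota> S"
proof (induction n)
  case 0
  have "\<iota> 1 \<in> gen_subfield \<iota> S" by (rule gen_subfield.const)
  then show ?case by simp
next
  case (Suc n)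
  then show ?case by (simp add: gen_subfield.mult)
qed

lemma hyp_degree: assumes g1: "g \<ge> 1" shows "degree (hyp_poly g a \<alpha>) = 2 * g + 1"
proof -
  have "degree (monom a (g + 1) + monom (\<alpha> ^ g) 1) \<le> g + 1"
    by (rule degree_add_le) (auto intro: order.trans[OF degree_monom_le])
  then have "degree (monom a (g + 1) + monom (\<alpha> ^ g) 1) < degree (monom (1::'a) (2 * g + 1))"
    using g1 by (simp add: degree_monom_eq)
  then have "degree (monom 1 (2 * g + 1) + (monom a (g + 1) + monom (\<alpha> ^ g) 1)) = 2 * g + 1"
    by (subst degree_add_eq_left) (simp_all add: degree_monom_eq)
  then show ?thesis by (simp add: hyp_poly_def add.assoc)
qed

theorem theorem2:
  fixes \<iota> :: "'k::{field,finite} \<Rightarrow> 'L::field"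
    and p n g :: nat and a \<alpha> :: 'k and x y :: 'L
  assumes "prime p" and "p > 2" and "card (UNIV :: 'k set) = p ^ n"
    and "g \<ge> 2" and "coprime g p"
    and "\<alpha> \<noteq> 0"
    and "squarefree (hyp_poly g a \<alpha>)"
    and "is_hyperell_ff \<iota> (hyp_poly g a \<alpha>) x y"
  shows "(odd g \<longrightarrow>
            involution_claim \<iota> x y g \<alpha> (\<alpha> ^ ((g + 1) div 2))
              (dickson g \<alpha> + [:a:])
              ([:- 4 * \<alpha>, 0, 1:] * (dickson g \<alpha> + [:a:])))
       \<and> (even g \<longrightarrow> (\<forall>\<beta>. \<beta> ^ 2 = \<alpha> \<longrightarrow>
            involution_claim \<iota> x y g \<alpha> (\<beta> ^ (g + 1))
              ([:2 * \<beta>, 1:] * (dickson g \<alpha> + [:a:]))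
              ([:- 2 * \<beta>, 1:] * (dickson g \<alpha> + [:a:]))))"
proof -
  note H = assms(8)[unfolded is_hyperell_ff_def]
  interpret emb \<iota> by unfold_locales (use H in blast)
  interpret hyp \<iota> "hyp_poly g a \<alpha>" x y
    by unfold_locales (use H in \<open>simp_all add: evalp_E hyp_degree[OF order.trans[OF _ assms(4)]]\<close>)
  have \<alpha>0: "\<alpha> \<noteq> 0" by fact
  have g2: "g \<ge> 2" by fact
  have Ef: "E (hyp_poly g a \<alpha>) z = z ^ (2 * g + 1) + \<iota> a * z ^ (g + 1) + \<iota> \<alpha> ^ g * z" for z
    by (simp add: hyp_poly_def)
  have Y: "y ^ 2 = x ^ (2 * g + 1) + \<iota> a * x ^ (g + 1) + \<iota> \<alpha> ^ g * x" using yf Ef by simp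
  have xnz: "x \<noteq> 0" by (rule x_nz)
  have a0: "\<iota> \<alpha> \<noteq> 0" using \<alpha>0 by simp
  define w where "w = \<iota> \<alpha> / x"
  have tw: "P = 0" if "E P w = 0" for P
  proof -
    have "E [:\<alpha>:] x = \<iota> \<alpha>" by simp
    then have "w = E [:\<alpha>:] x / x" unfolding w_def by simp
    then show ?thesis using trans_frac[of "[:\<alpha>:]" P] \<alpha>0 that by simp
  qed
  have tx: "P = 0" if "E P x = 0" for P using trans_E that by blast
  have wx: "w \<noteq> x"
  proof
    assume "w = x"
    then have "x * x - \<iota> \<alpha> = 0" unfolding w_def using xnz by (simp add: field_simps)
    then have "E [:- \<alpha>, 0, 1:] x = 0" by (simp add: algebra_simps)
    then have "[:- \<alpha>, 0, 1:] = 0" by (rule trans_E)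
    then show False by simp
  qed
  have wnz: "w \<noteq> 0" unfolding w_def using a0 xnz by simp
  define om where "om = phi x (- y)"
  have yw0: "(- y) ^ 2 = E (hyp_poly g a \<alpha>) x" using yf by simp
  have omk: "khom om" unfolding om_def by (rule phi_khom[OF tx yw0])
  have omx: "om x = x" unfolding om_def by (rule phi_x[OF tx])
  have omy: "om y = - y" unfolding om_def by (rule phi_y[OF tx])
  have "om (- y) = y" using omy khom_neg[OF omk] by simp
  then have omK: "K_aut \<iota> om" unfolding om_def using phi_invol[OF tx yw0] omx[unfolded om_def] by simp
  have xK: "x \<in> gen_subfield \<iota> {x}" by (rule gen_subfield.gen) simp
  have cK: "\<iota> c \<in> gen_subfield \<iota> {x}" for c by (rule gen_subfield.const)
  have Dk: "E (dickson g \<alpha>) (x + \<iota> \<alpha> / x) = x ^ g + (\<iota> \<alpha> / x) ^ g"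
    by (rule E_dickson) (use xnz g2 in auto)
  have claim: "involution_claim \<iota> x y g \<alpha> c h1 h2"
    if c2: "c ^ 2 = \<alpha> ^ (g + 1)"
      and q1: "\<And>t. K_aut \<iota> t \<Longrightarrow> t x = w \<Longrightarrow> t y = y * \<iota> c / x ^ (g + 1) \<Longrightarrow> quotient_given_by \<iota> t h1"
      and q2: "\<And>t. K_aut \<iota> t \<Longrightarrow> t x = w \<Longrightarrow> t y = - (y * \<iota> c / x ^ (g + 1)) \<Longrightarrow> quotient_given_by \<iota> t h2"
    for c h1 h2
  proof -
    define Yc where "Yc = y * \<iota> c / x ^ (g + 1)"
    define sg where "sg = phi w Yc"
    have C2: "\<iota> c ^ 2 = \<iota> \<alpha> ^ (g + 1)" using c2 by (metis iota_power)
    have yw: "Yc ^ 2 = E (hyp_poly g a \<alpha>) w"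
      unfolding Yc_def Ef w_def by (rule yw_gen[OF xnz C2 Y])
    have sk: "khom sg" unfolding sg_def by (rule phi_khom[OF tw yw])
    have sx: "sg x = w" unfolding sg_def by (rule phi_x[OF tw])
    have sy: "sg y = Yc" unfolding sg_def by (rule phi_y[OF tw])
    have sw: "sg w = x" unfolding w_def
      using xnz a0 by (simp add: khom_divide[OF sk] khom_const[OF sk] sx w_def)
    have "sg (y * \<iota> c / x ^ (g + 1)) = sg y * \<iota> c / (sg x) ^ (g + 1)"
      by (simp add: khom_divide[OF sk] khom_mult[OF sk] khom_const[OF sk] khom_power[OF sk])
    also have "\<dots> = (y * \<iota> c / x ^ (g + 1)) * \<iota> c / (\<iota> \<alpha> / x) ^ (g + 1)"
      unfolding sx sy Yc_def w_def ..
    also have "\<dots> = y" by (rule invol_gen[OF xnz a0 C2])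
    finally have sYc: "sg Yc = y" unfolding Yc_def .
    have inv: "sg \<circ> sg = id" and sK: "K_aut \<iota> sg"
      using phi_invol[OF tw yw] sw sYc unfolding sg_def by auto
    have tK: "K_aut \<iota> (om \<circ> sg)"
      using omK sK by (auto simp: K_aut_iff intro: bij_comp khom_comp)
    have tx': "(om \<circ> sg) x = w" using sx omx unfolding w_def
      by (simp add: khom_divide[OF omk] khom_const[OF omk])
    have ty': "(om \<circ> sg) y = - Yc" using sy omx omy unfolding Yc_def
      by (simp add: khom_divide[OF omk] khom_mult[OF omk] khom_const[OF omk] khom_power[OF omk])
    show ?thesis unfolding involution_claim_def
    proof (rule exI[of _ sg], rule exI[of _ om], intro conjI)
      show "K_aut \<iota> sg" by fact
      show "sg x = \<iota> \<alpha> / x" using sx w_def by simp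
      show "sg y = y * \<iota> c / x ^ (g + 1)" using sy Yc_def by simp
      show "K_aut \<iota> om" by fact
      show "om x = x" by fact
      show "om y = - y" by fact
      show "sg \<circ> sg = id" by fact
      show "sg \<noteq> id" using sx wx by auto
      show "sg \<noteq> om" using sx omx wx by auto
      show "quotient_given_by \<iota> sg h1" using q1[OF sK sx] sy Yc_def by simp
      show "quotient_given_by \<iota> (om \<circ> sg) h2" by (rule q2[OF tK tx']) (use ty' Yc_def in simp)
    qed
  qed
  have quot: "quotient_given_by \<iota> t h"
    if "K_aut \<iota> t" "t x = w" "r \<in> gen_subfield \<iota> {x}" "r \<noteq> 0" "t y * t r = y * r"
       "(y * r) ^ 2 = E h (x + \<iota> \<alpha> / x)" for t r h
  proof (rule quotient[OF that(1) \<alpha>0 _ refl that(3,4) _ that(6)])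
    show "t x = \<iota> \<alpha> / x" using that(2) w_def by simp
    have "khom t" using that(1) by (simp add: K_aut_iff)
    then show "t (y * r) = y * r" using that(5) by (simp add: khom_mult)
  qed
  have h1E: "E (dickson g \<alpha> + [:a:]) (x + \<iota> \<alpha> / x) = x ^ g + (\<iota> \<alpha> / x) ^ g + \<iota> a"
    using Dk by simp
  have odd_part: "involution_claim \<iota> x y g \<alpha> (\<alpha> ^ ((g + 1) div 2))
              (dickson g \<alpha> + [:a:])
              ([:- 4 * \<alpha>, 0, 1:] * (dickson g \<alpha> + [:a:]))" if og: "odd g"
  proof -
    define k where "k = (g + 1) div 2"
    have gk: "g + 1 = 2 * k" unfolding k_def using og by simp
    define c where "c = \<alpha> ^ k"
    have c2: "c ^ 2 = \<alpha> ^ (g + 1)" unfolding c_def gk by (simp add: power_mult[symmetric] mult.commute)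
    have Cc: "\<iota> c = \<iota> \<alpha> ^ k" unfolding c_def by simp
    have "involution_claim \<iota> x y g \<alpha> c (dickson g \<alpha> + [:a:]) ([:- 4 * \<alpha>, 0, 1:] * (dickson g \<alpha> + [:a:]))"
    proof (rule claim[OF c2])
      fix t assume tK: "K_aut \<iota> t" and tx: "t x = w" and ty: "t y = y * \<iota> c / x ^ (g + 1)"
      have tk: "khom t" using tK by (simp add: K_aut_iff)
      show "quotient_given_by \<iota> t (dickson g \<alpha> + [:a:])"
      proof (rule quot[OF tK tx])
        show "inverse (x ^ k) \<in> gen_subfield \<iota> {x}" by (intro gen_subfield.inv gen_pow xK)
        show "inverse (x ^ k) \<noteq> 0" using xnz by simp
        have "t (inverse (x ^ k)) = inverse ((\<iota> \<alpha> / x) ^ k)"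
          by (simp add: khom_inverse[OF tk] khom_power[OF tk] tx w_def)
        then show "t y * t (inverse (x ^ k)) = y * inverse (x ^ k)"
          unfolding ty by (simp only: o_sv[OF xnz a0 gk Cc])
        show "(y * inverse (x ^ k)) ^ 2 = E (dickson g \<alpha> + [:a:]) (x + \<iota> \<alpha> / x)"
          unfolding h1E by (rule o_v2[OF xnz gk Y])
      qed
    next
      fix t assume tK: "K_aut \<iota> t" and tx: "t x = w" and ty: "t y = - (y * \<iota> c / x ^ (g + 1))"
      have tk: "khom t" using tK by (simp add: K_aut_iff)
      show "quotient_given_by \<iota> t ([:- 4 * \<alpha>, 0, 1:] * (dickson g \<alpha> + [:a:]))"
      proof (rule quot[OF tK tx])
        show "(x - \<iota> \<alpha> / x) * inverse (x ^ k) \<in> gen_subfield \<iota> {x}"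
          unfolding diff_conv_add_uminus divide_inverse
          by (intro gen_subfield.mult gen_subfield.add gen_subfield.neg gen_subfield.inv gen_pow xK cK)
        show "(x - \<iota> \<alpha> / x) * inverse (x ^ k) \<noteq> 0" using xnz wx unfolding w_def by auto
        have "t ((x - \<iota> \<alpha> / x) * inverse (x ^ k)) = (\<iota> \<alpha> / x - \<iota> \<alpha> / (\<iota> \<alpha> / x)) * inverse ((\<iota> \<alpha> / x) ^ k)"
          by (simp add: khom_inverse[OF tk] khom_power[OF tk] khom_mult[OF tk] khom_diff[OF tk]
              khom_divide[OF tk] khom_const[OF tk] tx w_def)
        then show "t y * t ((x - \<iota> \<alpha> / x) * inverse (x ^ k)) = y * ((x - \<iota> \<alpha> / x) * inverse (x ^ k))"
          unfolding ty by (simp only: o_tv[OF xnz a0 gk Cc])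
        have "E [:- 4 * \<alpha>, 0, 1:] (x + \<iota> \<alpha> / x) = (x + \<iota> \<alpha> / x) ^ 2 - 4 * \<iota> \<alpha>"
          by (simp add: power2_eq_square)
        then show "(y * ((x - \<iota> \<alpha> / x) * inverse (x ^ k))) ^ 2 =
            E ([:- 4 * \<alpha>, 0, 1:] * (dickson g \<alpha> + [:a:])) (x + \<iota> \<alpha> / x)"
          unfolding E_mult h1E by (simp only: o_v2'[OF xnz gk Y])
      qed
    qed
    then show ?thesis unfolding c_def k_def .
  qed
  have even_part: "involution_claim \<iota> x y g \<alpha> (\<beta> ^ (g + 1))
              ([:2 * \<beta>, 1:] * (dickson g \<alpha> + [:a:]))
              ([:- 2 * \<beta>, 1:] * (dickson g \<alpha> + [:a:]))" if eg: "even g" and b2: "\<beta> ^ 2 = \<alpha>" for \<beta>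
  proof -
    define n where "n = g div 2"
    have gn: "g = 2 * n" unfolding n_def using eg by simp
    define B where "B = \<iota> \<beta>"
    have AB: "\<iota> \<alpha> = B ^ 2" unfolding B_def using b2 by (metis iota_power)
    have B0: "B \<noteq> 0" using a0 AB by auto
    have c2: "(\<beta> ^ (g + 1)) ^ 2 = \<alpha> ^ (g + 1)" using b2 by (metis power_mult_distrib power_mult mult.commute power2_eq_square)
    have Cc: "\<iota> (\<beta> ^ (g + 1)) = B ^ (g + 1)" unfolding B_def by simp
    have YB: "y ^ 2 = x ^ (2 * g + 1) + \<iota> a * x ^ (g + 1) + (B ^ 2) ^ g * x" using Y AB B_def by simp
    have h1E': "E (dickson g \<alpha> + [:a:]) (x + B ^ 2 / x) = x ^ g + (B ^ 2 / x) ^ g + \<iota> a"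
      using h1E AB B_def by simp
    have wB: "w = B ^ 2 / x" unfolding w_def AB ..
    have xB1: "x + B \<noteq> 0"
    proof
      assume "x + B = 0"
      then have "E [:\<beta>, 1:] x = 0" by (simp add: B_def algebra_simps)
      then have "[:\<beta>, 1:] = 0" by (rule trans_E)
      then show False by simp
    qed
    have xB2: "x - B \<noteq> 0"
    proof
      assume "x - B = 0"
      then have "E [:- \<beta>, 1:] x = 0" by (simp add: B_def algebra_simps)
      then have "[:- \<beta>, 1:] = 0" by (rule trans_E)
      then show False by simp
    qed
    show ?thesis
    proof (rule claim[OF c2])
      fix t assume tK: "K_aut \<iota> t" and tx: "t x = w" and ty: "t y = y * \<iota> (\<beta> ^ (g + 1)) / x ^ (g + 1)"
      have tk: "khom t" using tK by (simp add: K_aut_iff)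
      show "quotient_given_by \<iota> t ([:2 * \<beta>, 1:] * (dickson g \<alpha> + [:a:]))"
      proof (rule quot[OF tK tx])
        show "(x + B) * inverse (x ^ (n + 1)) \<in> gen_subfield \<iota> {x}" unfolding B_def
          by (intro gen_subfield.mult gen_subfield.add gen_subfield.inv gen_pow xK cK)
        show "(x + B) * inverse (x ^ (n + 1)) \<noteq> 0" using xnz xB1 by simp
        have tB: "t B = B" unfolding B_def by (rule khom_const[OF tk])
        have "t ((x + B) * inverse (x ^ (n + 1))) = (t x + t B) * inverse (t x ^ (n + 1))"
          by (simp only: khom_mult[OF tk] khom_add[OF tk] khom_inverse[OF tk] khom_power[OF tk])
        then have "t ((x + B) * inverse (x ^ (n + 1))) = (B ^ 2 / x + B) * inverse ((B ^ 2 / x) ^ (n + 1))"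
          unfolding tB tx wB .
        then show "t y * t ((x + B) * inverse (x ^ (n + 1))) = y * ((x + B) * inverse (x ^ (n + 1)))"
          unfolding ty Cc by (simp only: e_sv[OF xnz B0 gn refl])
        have "E [:2 * \<beta>, 1:] (x + \<iota> \<alpha> / x) = (x + B ^ 2 / x) + 2 * 1 * B"
          unfolding AB B_def by simp
        then show "(y * ((x + B) * inverse (x ^ (n + 1)))) ^ 2 = E ([:2 * \<beta>, 1:] * (dickson g \<alpha> + [:a:])) (x + \<iota> \<alpha> / x)"
          unfolding E_mult h1E using e_v2[OF xnz gn YB, of 1] AB B_def by simp
      qed
    next
      fix t assume tK: "K_aut \<iota> t" and tx: "t x = w" and ty: "t y = - (y * \<iota> (\<beta> ^ (g + 1)) / x ^ (g + 1))"
      have tk: "khom t" using tK by (simp add: K_aut_iff)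
      show "quotient_given_by \<iota> t ([:- 2 * \<beta>, 1:] * (dickson g \<alpha> + [:a:]))"
      proof (rule quot[OF tK tx])
        show "(x - B) * inverse (x ^ (n + 1)) \<in> gen_subfield \<iota> {x}" unfolding B_def diff_conv_add_uminus
          by (intro gen_subfield.mult gen_subfield.add gen_subfield.neg gen_subfield.inv gen_pow xK cK)
        show "(x - B) * inverse (x ^ (n + 1)) \<noteq> 0" using xnz xB2 by simp
        have tB: "t B = B" unfolding B_def by (rule khom_const[OF tk])
        have "t ((x - B) * inverse (x ^ (n + 1))) = (t x - t B) * inverse (t x ^ (n + 1))"
          by (simp only: khom_mult[OF tk] khom_diff[OF tk] khom_inverse[OF tk] khom_power[OF tk])
        then have "t ((x - B) * inverse (x ^ (n + 1))) = (B ^ 2 / x - B) * inverse ((B ^ 2 / x) ^ (n + 1))"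
          unfolding tB tx wB .
        then show "t y * t ((x - B) * inverse (x ^ (n + 1))) = y * ((x - B) * inverse (x ^ (n + 1)))"
          unfolding ty Cc by (simp only: e_tv[OF xnz B0 gn refl])
        have "E [:- 2 * \<beta>, 1:] (x + \<iota> \<alpha> / x) = (x + B ^ 2 / x) + 2 * (- 1) * B"
          unfolding AB B_def by simp
        then show "(y * ((x - B) * inverse (x ^ (n + 1)))) ^ 2 = E ([:- 2 * \<beta>, 1:] * (dickson g \<alpha> + [:a:])) (x + \<iota> \<alpha> / x)"
          unfolding E_mult h1E using e_v2[OF xnz gn YB, of "- 1"] AB B_def by simp
      qed
    qed
  qed
  show ?thesis using odd_part even_part by blast
qed


end
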